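(* Let $\mathcal{C}$ be a category with a faithful functor $Q:\mathcal{C}\to\mathbf{Set}$ for which there exist an object $A_0$ and an element $x_0\in Q(A_0)$ satisfying (1Q) and (2Q) below. Then every automorphism of $\mathcal{C}$ is potentially quasi-inner.
   Context: (1Q): for every object $A$ of $\mathcal{C}$ and every $a\in Q(A)$ there is exactly one morphism $\alpha:A_0\to A$ with $Q(\alpha)(x_0)=a$. (2Q): for every object $A$ there is a morphism $\alpha:A\to A_0$ such that $Q(\alpha)$ is surjective. For objects $A,B$, a map $s:Q(A)\to Q(B)$ is a $\mathcal{C}$-bijection if $s$ is injective and for any two morphisms $\alpha_1,\alpha_2:B\to C$ of $\mathcal{C}$, $Q(\alpha_1)\circ s=Q(\alpha_2)\circ s$ implies $\alpha_1=\alpha_2$. An automorphism $\Phi$ of $\mathcal{C}$ is potentially quasi-inner if there exists a family of $\mathcal{C}$-bijections $s_A:Q(A)\to Q(\Phi(A))$, $A\in\mathrm{Ob}\,\mathcal{C}$, such that $Q(\Phi(\mu))\circ s_A=s_B\circ Q(\mu)$ for every morphism $\mu:A\to B$. *)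

theory Defs
  imports Main
begin

text \<open>A (small) category, given by a set of objects, a set of morphisms,
  domain, codomain, composition (Comp g f = g \<circ> f) and identities.\<close>

record ('o, 'm) cat =
  Ob  :: "'o set"
  Ar  :: "'m set"
  Dom :: "'m \<Rightarrow> 'o"
  Cod :: "'m \<Rightarrow> 'o"
  Comp :: "'m \<Rightarrow> 'm \<Rightarrow> 'm"
  Id  :: "'o \<Rightarrow> 'm"

definition hom :: "('o, 'm) cat \<Rightarrow> 'o \<Rightarrow> 'o \<Rightarrow> 'm set" where
  "hom C A B = {f \<in> Ar C. Dom C f = A \<and> Cod C f = B}"

definition category :: "('o, 'm) cat \<Rightarrow> bool" where
  "category C \<longleftrightarrow>
     (\<forall>f\<in>Ar C. Dom C f \<in> Ob C \<and> Cod C f \<in> Ob C) \<and>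
     (\<forall>A\<in>Ob C. Id C A \<in> hom C A A) \<and>
     (\<forall>f\<in>Ar C. \<forall>g\<in>Ar C. Cod C f = Dom C g \<longrightarrow>
        Comp C g f \<in> hom C (Dom C f) (Cod C g)) \<and>
     (\<forall>f\<in>Ar C. Comp C f (Id C (Dom C f)) = f \<and> Comp C (Id C (Cod C f)) f = f) \<and>
     (\<forall>f\<in>Ar C. \<forall>g\<in>Ar C. \<forall>h\<in>Ar C. Cod C f = Dom C g \<longrightarrow> Cod C g = Dom C h \<longrightarrow>
        Comp C h (Comp C g f) = Comp C (Comp C h g) f)"

text \<open>A functor Q : C \<rightarrow> Set.  Sets are subsets of a fixed type 'e;
  Q(A) = QO A and Q(f) = QM f (considered as a map QO (Dom f) \<rightarrow> QO (Cod f)).\<close>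

definition set_functor :: "('o, 'm) cat \<Rightarrow> ('o \<Rightarrow> 'e set) \<Rightarrow> ('m \<Rightarrow> 'e \<Rightarrow> 'e) \<Rightarrow> bool" where
  "set_functor C QO QM \<longleftrightarrow>
     (\<forall>f\<in>Ar C. QM f ` QO (Dom C f) \<subseteq> QO (Cod C f)) \<and>
     (\<forall>A\<in>Ob C. \<forall>x\<in>QO A. QM (Id C A) x = x) \<and>
     (\<forall>f\<in>Ar C. \<forall>g\<in>Ar C. Cod C f = Dom C g \<longrightarrow>
        (\<forall>x\<in>QO (Dom C f). QM (Comp C g f) x = QM g (QM f x)))"

definition faithful_set_functor :: "('o, 'm) cat \<Rightarrow> ('o \<Rightarrow> 'e set) \<Rightarrow> ('m \<Rightarrow> 'e \<Rightarrow> 'e) \<Rightarrow> bool" where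
  "faithful_set_functor C QO QM \<longleftrightarrow> set_functor C QO QM \<and>
     (\<forall>A\<in>Ob C. \<forall>B\<in>Ob C. \<forall>f\<in>hom C A B. \<forall>g\<in>hom C A B.
        (\<forall>x\<in>QO A. QM f x = QM g x) \<longrightarrow> f = g)"

text \<open>Endofunctors and automorphisms (functors bijective on objects and morphisms;
  the inverse of such a functor is automatically a functor).\<close>

definition endofunctor :: "('o, 'm) cat \<Rightarrow> ('o \<Rightarrow> 'o) \<Rightarrow> ('m \<Rightarrow> 'm) \<Rightarrow> bool" where
  "endofunctor C FO FM \<longleftrightarrow>
     (\<forall>A\<in>Ob C. FO A \<in> Ob C) \<and>
     (\<forall>f\<in>Ar C. FM f \<in> Ar C \<and> Dom C (FM f) = FO (Dom C f) \<and> Cod C (FM f) = FO (Cod C f)) \<and>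
     (\<forall>A\<in>Ob C. FM (Id C A) = Id C (FO A)) \<and>
     (\<forall>f\<in>Ar C. \<forall>g\<in>Ar C. Cod C f = Dom C g \<longrightarrow> FM (Comp C g f) = Comp C (FM g) (FM f))"

definition automorphism :: "('o, 'm) cat \<Rightarrow> ('o \<Rightarrow> 'o) \<Rightarrow> ('m \<Rightarrow> 'm) \<Rightarrow> bool" where
  "automorphism C FO FM \<longleftrightarrow> endofunctor C FO FM \<and>
     bij_betw FO (Ob C) (Ob C) \<and> bij_betw FM (Ar C) (Ar C)"

definition cond_1Q :: "('o, 'm) cat \<Rightarrow> ('o \<Rightarrow> 'e set) \<Rightarrow> ('m \<Rightarrow> 'e \<Rightarrow> 'e) \<Rightarrow> 'o \<Rightarrow> 'e \<Rightarrow> bool" where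
  "cond_1Q C QO QM A0 x0 \<longleftrightarrow>
     (\<forall>A\<in>Ob C. \<forall>a\<in>QO A. \<exists>!\<alpha>. \<alpha> \<in> hom C A0 A \<and> QM \<alpha> x0 = a)"

definition cond_2Q :: "('o, 'm) cat \<Rightarrow> ('o \<Rightarrow> 'e set) \<Rightarrow> ('m \<Rightarrow> 'e \<Rightarrow> 'e) \<Rightarrow> 'o \<Rightarrow> bool" where
  "cond_2Q C QO QM A0 \<longleftrightarrow>
     (\<forall>A\<in>Ob C. \<exists>\<alpha>\<in>hom C A A0. QM \<alpha> ` QO A = QO A0)"

definition C_bijection :: "('o, 'm) cat \<Rightarrow> ('o \<Rightarrow> 'e set) \<Rightarrow> ('m \<Rightarrow> 'e \<Rightarrow> 'e)
    \<Rightarrow> 'o \<Rightarrow> 'o \<Rightarrow> ('e \<Rightarrow> 'e) \<Rightarrow> bool" where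
  "C_bijection C QO QM A B s \<longleftrightarrow>
     s ` QO A \<subseteq> QO B \<and> inj_on s (QO A) \<and>
     (\<forall>D\<in>Ob C. \<forall>\<alpha>1\<in>hom C B D. \<forall>\<alpha>2\<in>hom C B D.
        (\<forall>x\<in>QO A. QM \<alpha>1 (s x) = QM \<alpha>2 (s x)) \<longrightarrow> \<alpha>1 = \<alpha>2)"

definition potentially_quasi_inner :: "('o, 'm) cat \<Rightarrow> ('o \<Rightarrow> 'e set) \<Rightarrow> ('m \<Rightarrow> 'e \<Rightarrow> 'e)
    \<Rightarrow> ('o \<Rightarrow> 'o) \<Rightarrow> ('m \<Rightarrow> 'm) \<Rightarrow> bool" where
  "potentially_quasi_inner C QO QM FO FM \<longleftrightarrow>
     (\<exists>s :: 'o \<Rightarrow> 'e \<Rightarrow> 'e.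
        (\<forall>A\<in>Ob C. C_bijection C QO QM A (FO A) (s A)) \<and>
        (\<forall>\<mu>\<in>Ar C. \<forall>x\<in>QO (Dom C \<mu>).
           QM (FM \<mu>) (s (Dom C \<mu>) x) = s (Cod C \<mu>) (QM \<mu> x)))"

end

theory Submission
  imports Defs
begin

theorem theorem1:
  fixes C :: "('o, 'm) cat" and QO :: "'o \<Rightarrow> 'e set" and QM :: "'m \<Rightarrow> 'e \<Rightarrow> 'e"
  assumes "category C"
    and "faithful_set_functor C QO QM"
    and "A0 \<in> Ob C" and "x0 \<in> QO A0"
    and "cond_1Q C QO QM A0 x0"
    and "cond_2Q C QO QM A0"
  shows "\<forall>FO FM. automorphism C FO FM \<longrightarrow> potentially_quasi_inner C QO QM FO FM"
proof (intro allI impI)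
  fix FO FM assume aut: "automorphism C FO FM"
  have c1: "\<forall>f\<in>Ar C. Dom C f \<in> Ob C \<and> Cod C f \<in> Ob C"
    and c2: "\<forall>A\<in>Ob C. Id C A \<in> hom C A A"
    and c3: "\<forall>f\<in>Ar C. \<forall>g\<in>Ar C. Cod C f = Dom C g \<longrightarrow>
        Comp C g f \<in> hom C (Dom C f) (Cod C g)"
    and c5: "\<forall>f\<in>Ar C. \<forall>g\<in>Ar C. \<forall>h\<in>Ar C. Cod C f = Dom C g \<longrightarrow> Cod C g = Dom C h \<longrightarrow>
        Comp C h (Comp C g f) = Comp C (Comp C h g) f"
    using assms(1) unfolding category_def by blast+
  have ar: "\<And>f. f \<in> Ar C \<Longrightarrow> Dom C f \<in> Ob C \<and> Cod C f \<in> Ob C" using c1 by blast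
  have comph: "\<And>f g A B D. f \<in> hom C A B \<Longrightarrow> g \<in> hom C B D \<Longrightarrow> Comp C g f \<in> hom C A D"
  proof -
    fix f g A B D assume "f \<in> hom C A B" "g \<in> hom C B D"
    then show "Comp C g f \<in> hom C A D" using c3 unfolding hom_def by auto
  qed
  have f1: "\<forall>f\<in>Ar C. QM f ` QO (Dom C f) \<subseteq> QO (Cod C f)"
    and f3: "\<forall>f\<in>Ar C. \<forall>g\<in>Ar C. Cod C f = Dom C g \<longrightarrow>
        (\<forall>x\<in>QO (Dom C f). QM (Comp C g f) x = QM g (QM f x))"
    and f4: "\<forall>A\<in>Ob C. \<forall>B\<in>Ob C. \<forall>f\<in>hom C A B. \<forall>g\<in>hom C A B.
        (\<forall>x\<in>QO A. QM f x = QM g x) \<longrightarrow> f = g"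
    using assms(2) unfolding faithful_set_functor_def set_functor_def by blast+
  have qmap: "\<And>f A B x. f \<in> hom C A B \<Longrightarrow> x \<in> QO A \<Longrightarrow> QM f x \<in> QO B"
    using f1 unfolding hom_def by blast
  have qcomp: "\<And>f g A B D x. f \<in> hom C A B \<Longrightarrow> g \<in> hom C B D \<Longrightarrow> x \<in> QO A \<Longrightarrow>
      QM (Comp C g f) x = QM g (QM f x)"
  proof -
    fix f g A B D x assume "f \<in> hom C A B" "g \<in> hom C B D" "x \<in> QO A"
    then show "QM (Comp C g f) x = QM g (QM f x)" using f3 unfolding hom_def by auto
  qed
  have faith: "\<And>f g A B. A \<in> Ob C \<Longrightarrow> B \<in> Ob C \<Longrightarrow> f \<in> hom C A B \<Longrightarrow> g \<in> hom C A B \<Longrightarrow>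
      (\<forall>x\<in>QO A. QM f x = QM g x) \<Longrightarrow> f = g"
    using f4 by blast
  have homar: "\<And>f A B. f \<in> hom C A B \<Longrightarrow> f \<in> Ar C \<and> Dom C f = A \<and> Cod C f = B"
    unfolding hom_def by auto
  have homob: "\<And>f A B. f \<in> hom C A B \<Longrightarrow> A \<in> Ob C \<and> B \<in> Ob C"
    using ar homar by blast
  have ex1: "\<And>A a. A \<in> Ob C \<Longrightarrow> a \<in> QO A \<Longrightarrow> \<exists>!\<alpha>. \<alpha> \<in> hom C A0 A \<and> QM \<alpha> x0 = a"
    using assms(5) unfolding cond_1Q_def by blast
  have uniq: "\<And>A f g. f \<in> hom C A0 A \<Longrightarrow> g \<in> hom C A0 A \<Longrightarrow> QM f x0 = QM g x0 \<Longrightarrow> f = g"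
  proof -
    fix A f g assume h: "f \<in> hom C A0 A" "g \<in> hom C A0 A" "QM f x0 = QM g x0"
    have "A \<in> Ob C" using homob h(1) by blast
    moreover have "QM f x0 \<in> QO A" using qmap h(1) assms(4) by blast
    ultimately show "f = g" using ex1 h by metis
  qed
  have e2: "\<forall>f\<in>Ar C. FM f \<in> Ar C \<and> Dom C (FM f) = FO (Dom C f) \<and> Cod C (FM f) = FO (Cod C f)"
    and e4: "\<forall>f\<in>Ar C. \<forall>g\<in>Ar C. Cod C f = Dom C g \<longrightarrow> FM (Comp C g f) = Comp C (FM g) (FM f)"
    and b1: "bij_betw FO (Ob C) (Ob C)" and b2: "bij_betw FM (Ar C) (Ar C)"
    using aut unfolding automorphism_def endofunctor_def by blast+
  have FMh: "\<And>f A B. f \<in> hom C A B \<Longrightarrow> FM f \<in> hom C (FO A) (FO B)"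
    using e2 unfolding hom_def by auto
  have FMc: "\<And>f g A B D. f \<in> hom C A B \<Longrightarrow> g \<in> hom C B D \<Longrightarrow> FM (Comp C g f) = Comp C (FM g) (FM f)"
    using e4 unfolding hom_def by auto
  have FOinj: "inj_on FO (Ob C)" and FOsurj: "FO ` Ob C = Ob C"
    and FMinj: "inj_on FM (Ar C)" and FMsurj: "FM ` Ar C = Ar C"
    using b1 b2 unfolding bij_betw_def by auto
  have FMinj': "\<And>f g A B A' B'. f \<in> hom C A B \<Longrightarrow> g \<in> hom C A' B' \<Longrightarrow> FM f = FM g \<Longrightarrow> f = g"
    using FMinj homar unfolding inj_on_def by blast
  have pull: "\<And>f X Y. X \<in> Ob C \<Longrightarrow> Y \<in> Ob C \<Longrightarrow> f \<in> hom C (FO X) (FO Y) \<Longrightarrow>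
       \<exists>f'. f' \<in> hom C X Y \<and> FM f' = f"
  proof -
    fix f X Y assume h: "X \<in> Ob C" "Y \<in> Ob C" "f \<in> hom C (FO X) (FO Y)"
    then have "f \<in> Ar C" using homar by blast
    then obtain f' where f': "f' \<in> Ar C" "f = FM f'" using FMsurj by blast
    have "FO (Dom C f') = FO X" "FO (Cod C f') = FO Y"
      using e2 f' h homar by auto
    then have "Dom C f' = X" "Cod C f' = Y" using FOinj ar[OF f'(1)] h(1,2) unfolding inj_on_def by blast+
    then show "\<exists>f'. f' \<in> hom C X Y \<and> FM f' = f" using f' unfolding hom_def by auto
  qed
  have pullob: "\<exists>D'. D' \<in> Ob C \<and> FO D' = D" if "D \<in> Ob C" for D
  proof -
    have "D \<in> FO ` Ob C" using FOsurj that by simp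
    then show ?thesis by (auto simp: image_iff)
  qed
  have gen: "\<And>A D b1 b2. b1 \<in> hom C A D \<Longrightarrow> b2 \<in> hom C A D \<Longrightarrow>
      (\<forall>\<alpha>\<in>hom C A0 A. Comp C b1 \<alpha> = Comp C b2 \<alpha>) \<Longrightarrow> b1 = b2"
  proof -
    fix A D b1 b2 assume h: "b1 \<in> hom C A D" "b2 \<in> hom C A D"
      "\<forall>\<alpha>\<in>hom C A0 A. Comp C b1 \<alpha> = Comp C b2 \<alpha>"
    have AD: "A \<in> Ob C" "D \<in> Ob C" using homob h(1) by blast+
    show "b1 = b2"
    proof (rule faith[OF AD h(1,2)], intro ballI)
      fix x assume x: "x \<in> QO A"
      then obtain \<alpha> where \<alpha>: "\<alpha> \<in> hom C A0 A" "QM \<alpha> x0 = x" using ex1[OF AD(1) x] by auto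
      have "QM b1 x = QM (Comp C b1 \<alpha>) x0" using qcomp[OF \<alpha>(1) h(1) assms(4)] \<alpha> by simp
      also have "\<dots> = QM (Comp C b2 \<alpha>) x0" using h(3) \<alpha>(1) by metis
      also have "\<dots> = QM b2 x" using qcomp[OF \<alpha>(1) h(2) assms(4)] \<alpha> by simp
      finally show "QM b1 x = QM b2 x" .
    qed
  qed
  obtain A1 where A1: "A1 \<in> Ob C" "FO A1 = A0" using pullob assms(3) by blast
  obtain \<pi> where \<pi>: "\<pi> \<in> hom C A1 A0" "QM \<pi> ` QO A1 = QO A0"
    using assms(6) A1 unfolding cond_2Q_def by blast
  define \<gamma> where "\<gamma> = FM \<pi>"
  have \<gamma>: "\<gamma> \<in> hom C A0 (FO A0)" using FMh[OF \<pi>(1)] A1 \<gamma>_def by simp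
  have epi: "\<And>f g D. f \<in> hom C (FO A0) D \<Longrightarrow> g \<in> hom C (FO A0) D \<Longrightarrow>
      Comp C f \<gamma> = Comp C g \<gamma> \<Longrightarrow> f = g"
  proof -
    fix f g D assume h: "f \<in> hom C (FO A0) D" "g \<in> hom C (FO A0) D" "Comp C f \<gamma> = Comp C g \<gamma>"
    have D: "D \<in> Ob C" using homob h(1) by blast
    obtain D' where D': "D' \<in> Ob C" "FO D' = D" using pullob D by blast
    obtain f' where f': "f' \<in> hom C A0 D'" "FM f' = f" using pull[OF assms(3) D'(1)] h(1) D' by blast
    obtain g' where g': "g' \<in> hom C A0 D'" "FM g' = g" using pull[OF assms(3) D'(1)] h(2) D' by blast
    have "FM (Comp C f' \<pi>) = FM (Comp C g' \<pi>)"
      using FMc[OF \<pi>(1) f'(1)] FMc[OF \<pi>(1) g'(1)] f' g' h(3) \<gamma>_def by simp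
    then have e: "Comp C f' \<pi> = Comp C g' \<pi>"
      using FMinj' comph[OF \<pi>(1) f'(1)] comph[OF \<pi>(1) g'(1)] by blast
    have "f' = g'"
    proof (rule faith[OF assms(3) D'(1) f'(1) g'(1)], intro ballI)
      fix y assume "y \<in> QO A0"
      then obtain z where z: "z \<in> QO A1" "y = QM \<pi> z" using \<pi>(2) by blast
      show "QM f' y = QM g' y"
        using qcomp[OF \<pi>(1) f'(1) z(1)] qcomp[OF \<pi>(1) g'(1) z(1)] e z(2) by simp
    qed
    then show "f = g" using f' g' by simp
  qed
  define al where "al A a = (THE \<alpha>. \<alpha> \<in> hom C A0 A \<and> QM \<alpha> x0 = a)" for A a
  have al: "al A a \<in> hom C A0 A \<and> QM (al A a) x0 = a" if "A \<in> Ob C" "a \<in> QO A" for A a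
    unfolding al_def by (rule theI'[OF ex1[OF that]])
  define y0 where "y0 = QM \<gamma> x0"
  have y0: "y0 \<in> QO (FO A0)" using qmap[OF \<gamma> assms(4)] y0_def by simp
  define s where "s A a = QM (FM (al A a)) y0" for A a
  have sx: "s A a = QM (Comp C (FM (al A a)) \<gamma>) x0" if "A \<in> Ob C" "a \<in> QO A" for A a
  proof -
    have "FM (al A a) \<in> hom C (FO A0) (FO A)" using FMh al[OF that] by blast
    then show ?thesis unfolding s_def y0_def using qcomp[OF \<gamma> _ assms(4)] by simp
  qed
  have assoc: "Comp C h (Comp C g f) = Comp C (Comp C h g) f"
    if "f \<in> hom C A B" "g \<in> hom C B D" "h \<in> hom C D E" for f g h A B D E
    using that c5 unfolding hom_def by auto
  show "potentially_quasi_inner C QO QM FO FM"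
    unfolding potentially_quasi_inner_def
  proof (intro exI[of _ s] conjI ballI)
    fix A assume A: "A \<in> Ob C"
    have k: "Comp C (FM (al A a)) \<gamma> \<in> hom C A0 (FO A)" if "a \<in> QO A" for a
      using comph[OF \<gamma> FMh] al[OF A that] by blast
    show "C_bijection C QO QM A (FO A) (s A)"
      unfolding C_bijection_def
    proof (intro conjI)
      show "s A ` QO A \<subseteq> QO (FO A)"
        using qmap[OF k] assms(4) sx[OF A] by auto
    next
      show "inj_on (s A) (QO A)"
      proof (rule inj_onI)
        fix a b assume a: "a \<in> QO A" and b: "b \<in> QO A" and e: "s A a = s A b"
        have "Comp C (FM (al A a)) \<gamma> = Comp C (FM (al A b)) \<gamma>"
          using uniq[OF k[OF a] k[OF b]] e sx[OF A a] sx[OF A b] by simp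
        then have "FM (al A a) = FM (al A b)"
          using epi FMh al[OF A a] al[OF A b] by blast
        then have "al A a = al A b" using FMinj' al[OF A a] al[OF A b] by blast
        then show "a = b" using al[OF A a] al[OF A b] by metis
      qed
    next
      show "\<forall>D\<in>Ob C. \<forall>\<alpha>1\<in>hom C (FO A) D. \<forall>\<alpha>2\<in>hom C (FO A) D.
        (\<forall>x\<in>QO A. QM \<alpha>1 (s A x) = QM \<alpha>2 (s A x)) \<longrightarrow> \<alpha>1 = \<alpha>2"
      proof (intro ballI impI)
        fix D \<alpha>1 \<alpha>2 assume D: "D \<in> Ob C" and h1: "\<alpha>1 \<in> hom C (FO A) D"
          and h2: "\<alpha>2 \<in> hom C (FO A) D"
          and H: "\<forall>x\<in>QO A. QM \<alpha>1 (s A x) = QM \<alpha>2 (s A x)"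
        obtain D' where D': "D' \<in> Ob C" "FO D' = D" using pullob D by blast
        obtain \<beta>1 where \<beta>1: "\<beta>1 \<in> hom C A D'" "FM \<beta>1 = \<alpha>1" using pull[OF A D'(1)] h1 D' by blast
        obtain \<beta>2 where \<beta>2: "\<beta>2 \<in> hom C A D'" "FM \<beta>2 = \<alpha>2" using pull[OF A D'(1)] h2 D' by blast
        have "\<forall>\<alpha>\<in>hom C A0 A. Comp C \<beta>1 \<alpha> = Comp C \<beta>2 \<alpha>"
        proof
          fix \<alpha> assume \<alpha>: "\<alpha> \<in> hom C A0 A"
          define a where "a = QM \<alpha> x0"
          have a: "a \<in> QO A" using qmap[OF \<alpha> assms(4)] a_def by simp
          have ala: "al A a = \<alpha>" using uniq[OF _ \<alpha>] al[OF A a] a_def by blast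
          have F: "FM \<alpha> \<in> hom C (FO A0) (FO A)" using FMh[OF \<alpha>] .
          have "QM (Comp C \<alpha>1 (Comp C (FM \<alpha>) \<gamma>)) x0 = QM (Comp C \<alpha>2 (Comp C (FM \<alpha>) \<gamma>)) x0"
            using qcomp[OF comph[OF \<gamma> F] h1 assms(4)] qcomp[OF comph[OF \<gamma> F] h2 assms(4)]
              H[rule_format, OF a] sx[OF A a] ala by simp
          then have "Comp C \<alpha>1 (Comp C (FM \<alpha>) \<gamma>) = Comp C \<alpha>2 (Comp C (FM \<alpha>) \<gamma>)"
            using uniq comph[OF comph[OF \<gamma> F] h1] comph[OF comph[OF \<gamma> F] h2] by blast
          then have "Comp C (Comp C \<alpha>1 (FM \<alpha>)) \<gamma> = Comp C (Comp C \<alpha>2 (FM \<alpha>)) \<gamma>"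
            using assoc[OF \<gamma> F h1] assoc[OF \<gamma> F h2] by simp
          then have "Comp C \<alpha>1 (FM \<alpha>) = Comp C \<alpha>2 (FM \<alpha>)"
            using epi comph[OF F h1] comph[OF F h2] by blast
          then have "FM (Comp C \<beta>1 \<alpha>) = FM (Comp C \<beta>2 \<alpha>)"
            using FMc[OF \<alpha> \<beta>1(1)] FMc[OF \<alpha> \<beta>2(1)] \<beta>1(2) \<beta>2(2) by simp
          then show "Comp C \<beta>1 \<alpha> = Comp C \<beta>2 \<alpha>"
            using FMinj' comph[OF \<alpha> \<beta>1(1)] comph[OF \<alpha> \<beta>2(1)] by blast
        qed
        then have "\<beta>1 = \<beta>2" using gen[OF \<beta>1(1) \<beta>2(1)] by blast
        then show "\<alpha>1 = \<alpha>2" using \<beta>1 \<beta>2 by simp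
      qed
    qed
  next
    fix \<mu> x assume \<mu>: "\<mu> \<in> Ar C" and x: "x \<in> QO (Dom C \<mu>)"
    define A where "A = Dom C \<mu>"
    define B where "B = Cod C \<mu>"
    have m: "\<mu> \<in> hom C A B" using \<mu> A_def B_def unfolding hom_def by simp
    have A: "A \<in> Ob C" and B: "B \<in> Ob C" using homob[OF m] by auto
    have xA: "x \<in> QO A" using x A_def by simp
    have alx: "al A x \<in> hom C A0 A" "QM (al A x) x0 = x" using al[OF A xA] by auto
    have mx: "QM \<mu> x \<in> QO B" using qmap[OF m xA] .
    have "QM (Comp C \<mu> (al A x)) x0 = QM \<mu> x" using qcomp[OF alx(1) m assms(4)] alx(2) by simp
    then have e: "al B (QM \<mu> x) = Comp C \<mu> (al A x)"
      using uniq[OF _ comph[OF alx(1) m]] al[OF B mx] by metis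
    have "s B (QM \<mu> x) = QM (FM (Comp C \<mu> (al A x))) y0" unfolding s_def e ..
    also have "\<dots> = QM (Comp C (FM \<mu>) (FM (al A x))) y0" using FMc[OF alx(1) m] by simp
    also have "\<dots> = QM (FM \<mu>) (QM (FM (al A x)) y0)"
      using qcomp[OF FMh[OF alx(1)] FMh[OF m] y0] .
    finally show "QM (FM \<mu>) (s (Dom C \<mu>) x) = s (Cod C \<mu>) (QM \<mu> x)"
      unfolding s_def A_def B_def by simp
  qed
qed

end
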